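(* Let $\Gamma = a : (\mathsf{Ref}~B)^{\diamond},\ b : (\mathsf{Ref}~B)^{\diamond},\ c : (\mathsf{Ref}~B)^{a,b}$, which is a well-formed context. Both $b$ and $c$ are valid qualifier differences between $c$ and $a$, i.e. each is a minimal qualifier $q$ with $\Gamma \vdash c <: a, q$. Moreover neither $\Gamma \vdash b <: c$ nor $\Gamma \vdash c <: b$ holds, so the two solutions are incomparable and no principal qualifier difference exists.
   Context: Setting: the reachability type system $\mathsf{G}^{\diamond}_{<:}$. Qualifiers are finite sets of variables possibly containing the freshness marker $\diamond$ (a fresh, unnamed location) and qualifier holes $\square$; $p,q$ denotes union. A context entry $x : T^{q}$ records the reachability qualifier $q$ of $x$. Subqualifying $\Gamma \vdash p <: q$ is generated by: transitivity; congruence ($p<:q$ and $r<:s$ give $p,r <: q,s$); subset inclusion ($p\subseteq q$ gives $p<:q$); variable expansion ($x : T^{q}\in\Gamma$ with $\diamond\notin q$ and $\square\notin q$ gives $x <: q$, and similarly for type-variable bounds); and self-reference packing ($f : F^{q}\in\Gamma$ gives $q\setminus\{\diamond,\square\} <: f$). $B$ is the base type and $\mathsf{Ref}$ the reference type. *)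

theory Defs
  imports Main
begin

type_synonym name = string

text \<open>Qualifier atoms: variables, the freshness marker (diamond), qualifier holes (square).\<close>
datatype qatom = QV name | QFresh | QHole

type_synonym qual = "qatom set"

text \<open>Types. TFun f x T q U r is the (self-referential) function type f(x : T^q) -> U^r,
  TAll f X T q U r the type abstraction f[X <: T^q] -> U^r.\<close>
datatype ty =
    TBase
  | TRef ty
  | TTVar name
  | TFun name name ty qual ty qual
  | TAll name name ty qual ty qual

fun is_fun_ty :: "ty \<Rightarrow> bool" where
  "is_fun_ty (TFun _ _ _ _ _ _) = True"
| "is_fun_ty (TAll _ _ _ _ _ _) = True"
| "is_fun_ty _ = False"

text \<open>Context entries: term variables x : T^q and type variables X <: T^q.\<close>
datatype bind = BVar name ty qual | BTVar name ty qual

type_synonym ctx = "bind list"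

fun bind_name :: "bind \<Rightarrow> name" where
  "bind_name (BVar x _ _) = x"
| "bind_name (BTVar x _ _) = x"

definition dom_ctx :: "ctx \<Rightarrow> name set" where
  "dom_ctx G = bind_name ` set G"

inductive subq :: "ctx \<Rightarrow> qual \<Rightarrow> qual \<Rightarrow> bool" where
  sq_trans: "subq G p q \<Longrightarrow> subq G q r \<Longrightarrow> subq G p r"
| sq_cong: "subq G p q \<Longrightarrow> subq G r s \<Longrightarrow> subq G (p \<union> r) (q \<union> s)"
| sq_sub: "p \<subseteq> q \<Longrightarrow> subq G p q"
| sq_var: "BVar x T q \<in> set G \<Longrightarrow> QFresh \<notin> q \<Longrightarrow> QHole \<notin> q \<Longrightarrow> subq G {QV x} q"
| sq_tvar: "BTVar x T q \<in> set G \<Longrightarrow> QFresh \<notin> q \<Longrightarrow> QHole \<notin> q \<Longrightarrow> subq G {QV x} q"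
| sq_self: "BVar f F q \<in> set G \<Longrightarrow> is_fun_ty F \<Longrightarrow> subq G (q - {QFresh, QHole}) {QV f}"

definition wf_qual :: "name set \<Rightarrow> qual \<Rightarrow> bool" where
  "wf_qual V q \<longleftrightarrow> finite q \<and> q \<subseteq> QV ` V \<union> {QFresh}"

fun wf_ty :: "name set \<Rightarrow> ty \<Rightarrow> bool" where
  "wf_ty V TBase = True"
| "wf_ty V (TRef T) = wf_ty V T"
| "wf_ty V (TTVar X) = (X \<in> V)"
| "wf_ty V (TFun f x T q U r) =
     (wf_ty V T \<and> wf_qual V q \<and> wf_ty (V \<union> {f, x}) U \<and> wf_qual (V \<union> {f, x}) r)"
| "wf_ty V (TAll f X T q U r) =
     (wf_ty V T \<and> wf_qual V q \<and> wf_ty (V \<union> {f, X}) U \<and> wf_qual (V \<union> {f, X}) r)"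

text \<open>Contexts are written left to right; later entries may refer to earlier ones.\<close>
inductive ctx_wf :: "ctx \<Rightarrow> bool" where
  wf_nil: "ctx_wf []"
| wf_var: "ctx_wf G \<Longrightarrow> x \<notin> dom_ctx G \<Longrightarrow> wf_ty (dom_ctx G) T \<Longrightarrow> wf_qual (dom_ctx G) q
           \<Longrightarrow> ctx_wf (G @ [BVar x T q])"
| wf_tvar: "ctx_wf G \<Longrightarrow> x \<notin> dom_ctx G \<Longrightarrow> wf_ty (dom_ctx G) T \<Longrightarrow> wf_qual (dom_ctx G) q
           \<Longrightarrow> ctx_wf (G @ [BTVar x T q])"

definition qual_diff :: "ctx \<Rightarrow> qual \<Rightarrow> qual \<Rightarrow> qual \<Rightarrow> bool" where
  "qual_diff G p r q \<longleftrightarrow>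
     finite q \<and> subq G p (r \<union> q) \<and>
     (\<forall>q'. finite q' \<and> subq G p (r \<union> q') \<and> subq G q' q \<longrightarrow> subq G q q')"

definition principal_qual_diff :: "ctx \<Rightarrow> qual \<Rightarrow> qual \<Rightarrow> qual \<Rightarrow> bool" where
  "principal_qual_diff G p r q \<longleftrightarrow>
     qual_diff G p r q \<and> (\<forall>q'. qual_diff G p r q' \<longrightarrow> subq G q q')"

definition Gamma_ex :: ctx where
  "Gamma_ex = [BVar ''a'' (TRef TBase) {QFresh},
               BVar ''b'' (TRef TBase) {QFresh},
               BVar ''c'' (TRef TBase) {QV ''a'', QV ''b''}]"

end

theory Submission
  imports Defs
begin

definition DD :: "qual \<Rightarrow> qual" where
  "DD q = q \<union> (if QV ''a'' \<in> q \<and> QV ''b'' \<in> q then {QV ''c''} else {})"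

lemma DD_mono: "p \<subseteq> q \<Longrightarrow> DD p \<subseteq> DD q"
  unfolding DD_def by auto

lemma DD_idem: "p \<subseteq> DD q \<Longrightarrow> DD p \<subseteq> DD q"
  unfolding DD_def by (auto split: if_splits)

lemma inv: "subq G p q \<Longrightarrow> G = Gamma_ex \<Longrightarrow> p \<subseteq> DD q"
proof (induction rule: subq.induct)
  case (sq_trans G p q r)
  then show ?case using DD_idem by blast
next
  case (sq_cong G p q r s)
  then show ?case using DD_mono[of q "q \<union> s"] DD_mono[of s "q \<union> s"] by blast
next
  case (sq_sub p q G)
  then show ?case unfolding DD_def by auto
next
  case (sq_var x T q G)
  then show ?case unfolding DD_def Gamma_ex_def by auto
next
  case (sq_tvar x T q G)
  then show ?case unfolding Gamma_ex_def by auto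
next
  case (sq_self f F q G)
  then show ?case unfolding Gamma_ex_def by auto
qed

lemma nsub: "subq Gamma_ex p q \<Longrightarrow> p \<subseteq> DD q" using inv by blast

lemma c_ab: "subq Gamma_ex {QV ''c''} {QV ''a'', QV ''b''}"
  by (rule sq_var[where T="TRef TBase"]) (auto simp: Gamma_ex_def)

lemma small: "subq Gamma_ex q' {x} \<Longrightarrow> x \<noteq> QV ''a'' \<Longrightarrow> q' \<subseteq> {x}"
  using nsub[of q' "{x}"] unfolding DD_def by auto

lemma not_empty: "subq Gamma_ex {QV ''c''} ({QV ''a''} \<union> q') \<Longrightarrow> q' \<noteq> {}"
  using nsub[of "{QV ''c''}" "{QV ''a''} \<union> q'"] unfolding DD_def by auto

lemma wf: "ctx_wf Gamma_ex"
proof -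
  have e: "Gamma_ex = (([] @ [BVar ''a'' (TRef TBase) {QFresh}]) @ [BVar ''b'' (TRef TBase) {QFresh}])
     @ [BVar ''c'' (TRef TBase) {QV ''a'', QV ''b''}]" unfolding Gamma_ex_def by simp
  show ?thesis unfolding e
    by (intro wf_var wf_nil) (auto simp: dom_ctx_def wf_qual_def)
qed

theorem mainTheorem1:
  shows "ctx_wf Gamma_ex
    \<and> qual_diff Gamma_ex {QV ''c''} {QV ''a''} {QV ''b''}
    \<and> qual_diff Gamma_ex {QV ''c''} {QV ''a''} {QV ''c''}
    \<and> \<not> subq Gamma_ex {QV ''b''} {QV ''c''}
    \<and> \<not> subq Gamma_ex {QV ''c''} {QV ''b''}
    \<and> \<not> (\<exists>q. principal_qual_diff Gamma_ex {QV ''c''} {QV ''a''} q)"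
proof (intro conjI)
  show "ctx_wf Gamma_ex" by (rule wf)
  show "qual_diff Gamma_ex {QV ''c''} {QV ''a''} {QV ''b''}"
    unfolding qual_diff_def
  proof (intro conjI allI impI)
    show "subq Gamma_ex {QV ''c''} ({QV ''a''} \<union> {QV ''b''})" using c_ab by (simp add: insert_commute)
    fix q' assume h: "finite q' \<and> subq Gamma_ex {QV ''c''} ({QV ''a''} \<union> q') \<and> subq Gamma_ex q' {QV ''b''}"
    then have "q' \<subseteq> {QV ''b''}" using small by auto
    moreover have "q' \<noteq> {}" using h not_empty by blast
    ultimately have "q' = {QV ''b''}" by blast
    then show "subq Gamma_ex {QV ''b''} q'" by (simp add: sq_sub)
  qed simp
  show "qual_diff Gamma_ex {QV ''c''} {QV ''a''} {QV ''c''}"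
    unfolding qual_diff_def
  proof (intro conjI allI impI)
    show "subq Gamma_ex {QV ''c''} ({QV ''a''} \<union> {QV ''c''})" by (rule sq_sub) auto
    fix q' assume h: "finite q' \<and> subq Gamma_ex {QV ''c''} ({QV ''a''} \<union> q') \<and> subq Gamma_ex q' {QV ''c''}"
    then have "q' \<subseteq> {QV ''c''}" using small by auto
    moreover have "q' \<noteq> {}" using h not_empty by blast
    ultimately have "q' = {QV ''c''}" by blast
    then show "subq Gamma_ex {QV ''c''} q'" by (simp add: sq_sub)
  qed simp
  show "\<not> subq Gamma_ex {QV ''b''} {QV ''c''}" using nsub unfolding DD_def by fastforce
  show "\<not> subq Gamma_ex {QV ''c''} {QV ''b''}" using nsub unfolding DD_def by fastforce
  show "\<not> (\<exists>q. principal_qual_diff Gamma_ex {QV ''c''} {QV ''a''} q)"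
  proof
    assume "\<exists>q. principal_qual_diff Gamma_ex {QV ''c''} {QV ''a''} q"
    then obtain q where q: "principal_qual_diff Gamma_ex {QV ''c''} {QV ''a''} q" by blast
    have "subq Gamma_ex q {QV ''b''}" "subq Gamma_ex q {QV ''c''}"
      using q \<open>qual_diff Gamma_ex {QV ''c''} {QV ''a''} {QV ''b''}\<close>
        \<open>qual_diff Gamma_ex {QV ''c''} {QV ''a''} {QV ''c''}\<close>
      unfolding principal_qual_diff_def by auto
    then have "q \<subseteq> {QV ''b''}" "q \<subseteq> {QV ''c''}" using small by auto
    then have "q = {}" by blast
    moreover have "subq Gamma_ex {QV ''c''} ({QV ''a''} \<union> q)"
      using q unfolding principal_qual_diff_def qual_diff_def by blast
    ultimately show False using nsub unfolding DD_def by fastforce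
  qed
qed

end
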